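(* Consider the CGNS below with observed variable split as $\mathbf{x}=(\mathbf{x}_{\mathrm A},\mathbf{x}_{\mathrm B})\in\mathbb{R}^{k_{\mathrm A}+k_{\mathrm B}}$, and suppose that for every $t$ and $\mathbf{x}$: $\boldsymbol{\Lambda}^{\mathbf{x}_{\mathrm A}}=\mathbf{0}_{k_{\mathrm A}\times l}$, $(\boldsymbol{\Sigma}^{\mathbf{y}}\circ\boldsymbol{\Sigma}^{\mathbf{x}_{\mathrm A}})=\mathbf{0}_{l\times k_{\mathrm A}}$, and $(\boldsymbol{\Sigma}^{\mathbf{x}_{\mathrm A}}\circ\boldsymbol{\Sigma}^{\mathbf{x}_{\mathrm B}})=\mathbf{0}_{k_{\mathrm A}\times k_{\mathrm B}}$, with $(\boldsymbol{\Sigma}^{\mathbf{x}_{\mathrm A}}\circ\boldsymbol{\Sigma}^{\mathbf{x}_{\mathrm A}})$ and $(\boldsymbol{\Sigma}^{\mathbf{x}_{\mathrm B}}\circ\boldsymbol{\Sigma}^{\mathbf{x}_{\mathrm B}})$ invertible. Let $(\boldsymbol{\mu}_{\mathrm f|\mathbf{x}_{\mathrm B}},\mathbf{R}_{\mathrm f|\mathbf{x}_{\mathrm B}})$ and $(\boldsymbol{\mu}_{\mathrm s|\mathbf{x}_{\mathrm B}},\mathbf{R}_{\mathrm s|\mathbf{x}_{\mathrm B}})$ be the conditional filter and smoother statistics defined below. Then $\boldsymbol{\mu}_{\mathrm s|\mathbf{x}_{\mathrm B}}(t)=\boldsymbol{\mu}_{\mathrm f|\mathbf{x}_{\mathrm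 B}}(t)$ and $\mathbf{R}_{\mathrm s|\mathbf{x}_{\mathrm B}}(t)=\mathbf{R}_{\mathrm f|\mathbf{x}_{\mathrm B}}(t)$ for all $t\in[0,T]$; hence the Gaussian densities $p^{\mathrm s|\mathbf{x}_{\mathrm B}}_t(\mathbf{y}\mid\mathbf{x}_{\mathrm A})=\mathcal{N}(\boldsymbol{\mu}_{\mathrm s|\mathbf{x}_{\mathrm B}},\mathbf{R}_{\mathrm s|\mathbf{x}_{\mathrm B}})$ and $p^{\mathrm f|\mathbf{x}_{\mathrm B}}_t(\mathbf{y}\mid\mathbf{x}_{\mathrm A})=\mathcal{N}(\boldsymbol{\mu}_{\mathrm f|\mathbf{x}_{\mathrm B}},\mathbf{R}_{\mathrm f|\mathbf{x}_{\mathrm B}})$ coincide and their relative entropy is $0$ for every $t$ (no conditional assimilative causal link from $\mathbf{y}(t)$ to $\mathbf{x}_{\mathrm A}$ given $\mathbf{x}_{\mathrm B}$).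
   Context: CGNS: $\mathbf{x}\in\mathbb{R}^k$ (observed), $\mathbf{y}\in\mathbb{R}^l$ (unobserved), $d\mathbf{x}=(\boldsymbol{\Lambda}^{\mathbf{x}}(t,\mathbf{x})\mathbf{y}+\mathbf{f}^{\mathbf{x}}(t,\mathbf{x}))dt+\boldsymbol{\Sigma}^{\mathbf{x}}_1(t,\mathbf{x})d\mathbf{W}_1+\boldsymbol{\Sigma}^{\mathbf{x}}_2(t,\mathbf{x})d\mathbf{W}_2$, $d\mathbf{y}=(\boldsymbol{\Lambda}^{\mathbf{y}}(t,\mathbf{x})\mathbf{y}+\mathbf{f}^{\mathbf{y}}(t,\mathbf{x}))dt+\boldsymbol{\Sigma}^{\mathbf{y}}_1(t,\mathbf{x})d\mathbf{W}_1+\boldsymbol{\Sigma}^{\mathbf{y}}_2(t,\mathbf{x})d\mathbf{W}_2$, $\mathbf{W}_1,\mathbf{W}_2$ independent Wiener processes, standing regularity assumptions ensuring well-posedness of all equations below; coefficients evaluated at $(t,\mathbf{x}(t))$ along the observed path. The $\mathbf{x}$-coefficients are split in blocks: $\boldsymbol{\Lambda}^{\mathbf{x}}=\binom{\boldsymbol{\Lambda}^{\mathbf{x}_{\mathrm A}}}{\boldsymbol{\Lambda}^{\mathbf{x}_{\mathrm B}}}$, $\mathbf{f}^{\mathbf{x}}=\binom{\mathbf{f}^{\mathbf{x}_{\mathrm A}}}{\mathbf{f}^{\mathbf{x}_{\mathrm B}}}$, $\boldsymbol{\Sigma}^{\mathbf{x}}_m=\binom{\boldsymbol{\Sigma}^{\mathbf{x}_{\mathrm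 A}}_m}{\boldsymbol{\Sigma}^{\mathbf{x}_{\mathrm B}}_m}$. Notation: $(\boldsymbol{\Sigma}^{\mathbf{a}}\circ\boldsymbol{\Sigma}^{\mathbf{b}}):=\boldsymbol{\Sigma}^{\mathbf{a}}_1(\boldsymbol{\Sigma}^{\mathbf{b}}_1)^{\mathtt T}+\boldsymbol{\Sigma}^{\mathbf{a}}_2(\boldsymbol{\Sigma}^{\mathbf{b}}_2)^{\mathtt T}$. Conditioning on $\mathbf{x}_{\mathrm B}$ is implemented by assigning infinite observational uncertainty to $\mathbf{x}_{\mathrm B}$: under $(\boldsymbol{\Sigma}^{\mathbf{x}_{\mathrm A}}\circ\boldsymbol{\Sigma}^{\mathbf{x}_{\mathrm B}})=0$, $(\boldsymbol{\Sigma}^{\mathbf{x}}\circ\boldsymbol{\Sigma}^{\mathbf{x}})^{-1}=\mathrm{diag}((\boldsymbol{\Sigma}^{\mathbf{x}_{\mathrm A}}\circ\boldsymbol{\Sigma}^{\mathbf{x}_{\mathrm A}})^{-1},(\boldsymbol{\Sigma}^{\mathbf{x}_{\mathrm B}}\circ\boldsymbol{\Sigma}^{\mathbf{x}_{\mathrm B}})^{-1})$, and the limit $(\boldsymbol{\Sigma}^{\mathbf{x}_{\mathrm B}}\circ\boldsymbol{\Sigma}^{\mathbf{x}_{\mathrm B}})^{-1}\to0$ replaces it by $\boldsymbol{\Pi}:=\mathrm{diag}((\boldsymbol{\Sigma}^{\mathbf{x}_{\mathrm A}}\circ\boldsymbol{\Sigma}^{\mathbf{x}_{\mathrm A}})^{-1},\mathbf{0}_{k_{\mathrm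 B}\times k_{\mathrm B}})$. Define $\mathbf{K}_{\mathrm f|\mathbf{x}_{\mathrm B}}=((\boldsymbol{\Sigma}^{\mathbf{y}}\circ\boldsymbol{\Sigma}^{\mathbf{x}})+\mathbf{R}_{\mathrm f|\mathbf{x}_{\mathrm B}}(\boldsymbol{\Lambda}^{\mathbf{x}})^{\mathtt T})\boldsymbol{\Pi}$, $\mathbf{K}_{\mathrm s|\mathbf{x}_{\mathrm B}}=(\boldsymbol{\Sigma}^{\mathbf{y}}\circ\boldsymbol{\Sigma}^{\mathbf{x}})\boldsymbol{\Pi}$, $\mathbf{A}_{|\mathbf{x}_{\mathrm B}}=\boldsymbol{\Lambda}^{\mathbf{y}}-(\boldsymbol{\Sigma}^{\mathbf{y}}\circ\boldsymbol{\Sigma}^{\mathbf{x}})\boldsymbol{\Pi}\boldsymbol{\Lambda}^{\mathbf{x}}$, $\mathbf{B}_{|\mathbf{x}_{\mathrm B}}=(\boldsymbol{\Sigma}^{\mathbf{y}}\circ\boldsymbol{\Sigma}^{\mathbf{y}})-(\boldsymbol{\Sigma}^{\mathbf{y}}\circ\boldsymbol{\Sigma}^{\mathbf{x}})\boldsymbol{\Pi}(\boldsymbol{\Sigma}^{\mathbf{x}}\circ\boldsymbol{\Sigma}^{\mathbf{y}})$. The conditional filter statistics solve forward (from the usual filter initial condition) $d\boldsymbol{\mu}_{\mathrm f|\mathbf{x}_{\mathrm B}}=(\boldsymbol{\Lambda}^{\mathbf{y}}\boldsymbol{\mu}_{\mathrm f|\mathbf{x}_{\mathrm B}}+\mathbf{f}^{\mathbf{y}})dt+\mathbf{K}_{\mathrm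 f|\mathbf{x}_{\mathrm B}}(d\mathbf{x}-(\boldsymbol{\Lambda}^{\mathbf{x}}\boldsymbol{\mu}_{\mathrm f|\mathbf{x}_{\mathrm B}}+\mathbf{f}^{\mathbf{x}})dt)$, $d\mathbf{R}_{\mathrm f|\mathbf{x}_{\mathrm B}}=(\boldsymbol{\Lambda}^{\mathbf{y}}\mathbf{R}_{\mathrm f|\mathbf{x}_{\mathrm B}}+\mathbf{R}_{\mathrm f|\mathbf{x}_{\mathrm B}}(\boldsymbol{\Lambda}^{\mathbf{y}})^{\mathtt T}+(\boldsymbol{\Sigma}^{\mathbf{y}}\circ\boldsymbol{\Sigma}^{\mathbf{y}})-\mathbf{K}_{\mathrm f|\mathbf{x}_{\mathrm B}}(\boldsymbol{\Sigma}^{\mathbf{x}}\circ\boldsymbol{\Sigma}^{\mathbf{x}})\mathbf{K}_{\mathrm f|\mathbf{x}_{\mathrm B}}^{\mathtt T})dt$ (with $\mathbf{R}_{\mathrm f|\mathbf{x}_{\mathrm B}}$ invertible), and the conditional smoother statistics solve backward from $\boldsymbol{\mu}_{\mathrm s|\mathbf{x}_{\mathrm B}}(T)=\boldsymbol{\mu}_{\mathrm f|\mathbf{x}_{\mathrm B}}(T)$, $\mathbf{R}_{\mathrm s|\mathbf{x}_{\mathrm B}}(T)=\mathbf{R}_{\mathrm f|\mathbf{x}_{\mathrm B}}(T)$: $\overleftarrow{d\boldsymbol{\mu}_{\mathrm s|\mathbf{x}_{\mathrm B}}}=-(\boldsymbol{\Lambda}^{\mathbf{y}}\boldsymbol{\mu}_{\mathrm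 s|\mathbf{x}_{\mathrm B}}+\mathbf{f}^{\mathbf{y}}-\mathbf{B}_{|\mathbf{x}_{\mathrm B}}\mathbf{R}_{\mathrm f|\mathbf{x}_{\mathrm B}}^{-1}(\boldsymbol{\mu}_{\mathrm f|\mathbf{x}_{\mathrm B}}-\boldsymbol{\mu}_{\mathrm s|\mathbf{x}_{\mathrm B}}))dt+\mathbf{K}_{\mathrm s|\mathbf{x}_{\mathrm B}}(\overleftarrow{d\mathbf{x}}+(\boldsymbol{\Lambda}^{\mathbf{x}}\boldsymbol{\mu}_{\mathrm s|\mathbf{x}_{\mathrm B}}+\mathbf{f}^{\mathbf{x}})dt)$, $\overleftarrow{d\mathbf{R}_{\mathrm s|\mathbf{x}_{\mathrm B}}}=-((\mathbf{A}_{|\mathbf{x}_{\mathrm B}}+\mathbf{B}_{|\mathbf{x}_{\mathrm B}}\mathbf{R}_{\mathrm f|\mathbf{x}_{\mathrm B}}^{-1})\mathbf{R}_{\mathrm s|\mathbf{x}_{\mathrm B}}+\mathbf{R}_{\mathrm s|\mathbf{x}_{\mathrm B}}(\mathbf{A}_{|\mathbf{x}_{\mathrm B}}+\mathbf{B}_{|\mathbf{x}_{\mathrm B}}\mathbf{R}_{\mathrm f|\mathbf{x}_{\mathrm B}}^{-1})^{\mathtt T}-(\boldsymbol{\Sigma}^{\mathbf{y}}\circ\boldsymbol{\Sigma}^{\mathbf{y}})+\mathbf{K}_{\mathrm s|\mathbf{x}_{\mathrm B}}(\boldsymbol{\Sigma}^{\mathbf{x}}\circ\boldsymbol{\Sigma}^{\mathbf{x}})\mathbf{K}_{\mathrm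 s|\mathbf{x}_{\mathrm B}}^{\mathtt T})dt$, where $\overleftarrow{d\mathbf{u}}(t):=\lim_{\Delta t\to0^+}(\mathbf{u}(t)-\mathbf{u}(t+\Delta t))$ denotes the backward differential (backward Itô integral). *)

theory Defs
  imports "HOL-Analysis.Analysis"
begin

definition sigcirc ::
  "real^'d1^'m \<Rightarrow> real^'d2^'m \<Rightarrow> real^'d1^'n \<Rightarrow> real^'d2^'n \<Rightarrow> real^'n^'m" where
  "sigcirc A1 A2 B1 B2 = A1 ** transpose B1 + A2 ** transpose B2"

text \<open>Row blocks of an object indexed by the observed variable x = (x_A, x_B),
  where the index type of x is the disjoint sum 'ka + 'kb.\<close>
definition blkA :: "'c^('ka::finite + 'kb::finite) \<Rightarrow> 'c^'ka" where
  "blkA M = (\<chi> i. M $ Inl i)"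

definition blkB :: "'c^('ka::finite + 'kb::finite) \<Rightarrow> 'c^'kb" where
  "blkB M = (\<chi> i. M $ Inr i)"

definition PiMat :: "real^('ka::finite)^'ka \<Rightarrow> real^('ka + 'kb::finite)^('ka + 'kb)" where
  "PiMat CA = (\<chi> i j. case (i, j) of (Inl a, Inl b) \<Rightarrow> matrix_inv CA $ a $ b | _ \<Rightarrow> 0)"

definition Pi_of :: "real^('d1::finite)^('ka::finite + 'kb::finite) \<Rightarrow> real^('d2::finite)^('ka + 'kb)
    \<Rightarrow> real^('ka + 'kb)^('ka + 'kb)" where
  "Pi_of X1 X2 = PiMat (sigcirc (blkA X1) (blkA X2) (blkA X1) (blkA X2))"

definition gauss_density :: "real^'l \<Rightarrow> real^'l^'l \<Rightarrow> real^'l \<Rightarrow> real" where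
  "gauss_density mu R y =
     exp (- ((y - mu) \<bullet> (matrix_inv R *v (y - mu))) / 2) / sqrt ((2 * pi) ^ CARD('l) * det R)"

definition rel_entropy :: "(real^'l \<Rightarrow> real) \<Rightarrow> (real^'l \<Rightarrow> real) \<Rightarrow> real" where
  "rel_entropy p q = (\<integral>y. p y * ln (p y / q y) \<partial>lborel)"

end

theory Submission
  imports Defs
begin



lemma mm_add_r: "((A::real^'n^'m) + B) ** (C::real^'p^'n) = A ** C + B ** C"
  by (simp add: matrix_matrix_mult_def vec_eq_iff sum.distrib distrib_right)
lemma mm_diff_l: "(A::real^'n^'m) ** ((B::real^'p^'n) - C) = A ** B - A ** C"
  by (simp add: matrix_matrix_mult_def vec_eq_iff sum_subtractf right_diff_distrib)
lemma mm_diff_r: "((A::real^'n^'m) - B) ** (C::real^'p^'n) = A ** C - B ** C"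
  by (simp add: matrix_matrix_mult_def vec_eq_iff sum_subtractf left_diff_distrib)
lemma tr_add: "transpose ((A::real^'n^'m) + B) = transpose A + transpose B"
  by (simp add: transpose_def vec_eq_iff)
lemma tr_diff: "transpose ((A::real^'n^'m) - B) = transpose A - transpose B"
  by (simp add: transpose_def vec_eq_iff)

lemma bb_mm: "bounded_bilinear (\<lambda>(A::real^'n^'m) (B::real^'p^'n). A ** B)"
  unfolding bilinear_conv_bounded_bilinear[symmetric] bilinear_def linear_iff
  by (auto simp: matrix_add_ldistrib mm_add_r matrix_scalar_ac scalar_matrix_assoc)

lemma bb_mv: "bounded_bilinear (\<lambda>(A::real^'n^'m) (x::real^'n). A *v x)"
  unfolding bilinear_conv_bounded_bilinear[symmetric] bilinear_def linear_iff
  by (auto simp: algebra_simps vec_eq_iff matrix_vector_mult_def sum_distrib_left scaleR_sum_right sum.distrib)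

lemma bl_tr: "bounded_linear (transpose :: real^'n^'m \<Rightarrow> real^'m^'n)"
  unfolding linear_conv_bounded_linear[symmetric] linear_iff
  by (auto simp: tr_add transpose_scalar)

lemma cont_mm: "continuous_on S f \<Longrightarrow> continuous_on S g \<Longrightarrow> continuous_on S (\<lambda>x. (f x::real^'n^'m) ** (g x::real^'p^'n))"
  using bounded_bilinear.continuous_on[OF bb_mm] by blast
lemma cont_mv: "continuous_on S f \<Longrightarrow> continuous_on S g \<Longrightarrow> continuous_on S (\<lambda>x. (f x::real^'n^'m) *v (g x::real^'n))"
  using bounded_bilinear.continuous_on[OF bb_mv] by blast
lemma cont_tr: "continuous_on S f \<Longrightarrow> continuous_on S (\<lambda>x. transpose (f x::real^'n^'m))"
  using bounded_linear.continuous_on[OF bl_tr] by blast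

lemma cont_det: "continuous_on S f \<Longrightarrow> continuous_on S (\<lambda>x. det (f x::real^'n^'n))"
  unfolding det_def by (intro continuous_intros) auto

lemma minv: "invertible (A::real^'n^'n) \<Longrightarrow> A ** matrix_inv A = mat 1 \<and> matrix_inv A ** A = mat 1"
  unfolding invertible_def matrix_inv_def by (rule someI_ex)

lemma minv_formula:
  assumes "invertible (A::real^'n^'n)"
  shows "matrix_inv A = (\<chi> i j. det(\<chi> r c. if c=i then axis j 1 $ r else A$r$c) / det A)"
proof -
  have d: "det A \<noteq> 0" using assms invertible_det_nz by blast
  have "A *v (matrix_inv A *v axis j 1) = axis j 1" for j
    using minv[OF assms] by (simp add: matrix_vector_mul_assoc)
  then have "matrix_inv A *v axis j 1 = (\<chi> k. det(\<chi> r c. if c=k then axis j 1 $ r else A$r$c) / det A)" for j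
    using cramer[OF d] by blast
  moreover have "(matrix_inv A *v axis j 1) $ i = matrix_inv A $ i $ j" for i j
    by (simp add: matrix_vector_mult_def axis_def if_distrib cong: if_cong)
  ultimately show ?thesis by (simp add: vec_eq_iff)
qed

lemma cont_if_const: "continuous_on S g \<Longrightarrow> continuous_on S (\<lambda>x. if P then a else g x)"
  by (cases P) auto

lemma cont_minv:
  assumes "continuous_on S f" "\<And>x. x \<in> S \<Longrightarrow> invertible (f x::real^'n^'n)"
  shows "continuous_on S (\<lambda>x. matrix_inv (f x))"
proof -
  have "continuous_on S (\<lambda>x. (\<chi> i j. det(\<chi> r c. if c=i then axis j 1 $ r else f x$r$c) / det (f x)) :: real^'n^'n)"
    using assms invertible_det_nz
    by (intro continuous_intros continuous_on_vec_lambda cont_det continuous_on_divide cont_if_const) (auto intro!: continuous_intros)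
  then show ?thesis
    by (rule continuous_on_cong[THEN iffD1, rotated 2]) (auto simp: minv_formula assms)
qed



lemma gronwall_bwd:
  fixes g :: "real \<Rightarrow> real"
  assumes cg: "continuous_on {a..b} g" and g0: "\<And>t. t\<in>{a..b} \<Longrightarrow> 0 \<le> g t"
    and gb: "\<And>t. t\<in>{a..b} \<Longrightarrow> g t \<le> C * integral {t..b} g" and C: "0 \<le> C"
    and t: "t \<in> {a..b}"
  shows "g t = 0"
proof -
  define F where "F u = integral {u..b} g" for u
  define H where "H u = exp (C*u) * F u" for u
  have dF: "(F has_real_derivative - g x) (at x within {a..b})" if "x \<in> {a..b}" for x
    using integral_has_vector_derivative'[OF cg that] unfolding F_def
    by (simp add: has_real_derivative_iff_has_vector_derivative)
  have dH: "(H has_real_derivative (C * exp (C*x) * F x + exp (C*x) * (- g x))) (at x within {a..b})" if "x \<in> {a..b}" for x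
    unfolding H_def by (auto intro!: derivative_eq_intros dF[OF that])
  have cH: "continuous_on {a..b} H"
    using dH by (meson DERIV_continuous continuous_on_eq_continuous_within)
  have Fnn: "0 \<le> F u" if "u \<in> {a..b}" for u
    unfolding F_def using that g0
    by (intro integral_nonneg integrable_continuous_interval continuous_on_subset[OF cg]) auto
  have "H t \<le> H b"
  proof (rule DERIV_nonneg_imp_increasing_open[where f=H and a=t and b=b])
    show "t \<le> b" using t by auto
    show "continuous_on {t..b} H" using cH t by (auto intro: continuous_on_subset)
    fix x assume x: "t < x" "x < b"
    then have xi: "x \<in> {a..b}" using t by auto
    have "a < x" using x t by auto
    then have "at x within {a..b} = at x" using x by (intro at_within_Icc_at) auto
    then have "DERIV H x :> (C * exp (C*x) * F x + exp (C*x) * (- g x))" using dH[OF xi] by simp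
    moreover have "0 \<le> C * exp (C*x) * F x + exp (C*x) * (- g x)"
    proof -
      have "g x \<le> C * F x" using gb[OF xi] by (simp add: F_def)
      then have "exp (C*x) * g x \<le> exp (C*x) * (C * F x)" by (intro mult_left_mono) auto
      then show ?thesis by (simp add: algebra_simps)
    qed
    ultimately show "\<exists>y. DERIV H x :> y \<and> 0 \<le> y" by blast
  qed
  moreover have "H b = 0" by (simp add: H_def F_def)
  ultimately have "F t \<le> 0" unfolding H_def by (simp add: mult_le_0_iff)
  then have "F t = 0" using Fnn[OF t] by auto
  then show ?thesis using gb[OF t] g0[OF t] by (simp add: F_def)
qed

lemma gronwall_fwd:
  fixes g :: "real \<Rightarrow> real"
  assumes cg: "continuous_on {a..b} g" and g0: "\<And>t. t\<in>{a..b} \<Longrightarrow> 0 \<le> g t"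
    and gb: "\<And>t. t\<in>{a..b} \<Longrightarrow> g t \<le> C * integral {a..t} g" and C: "0 \<le> C"
    and t: "t \<in> {a..b}"
  shows "g t = 0"
proof -
  define F where "F u = integral {a..u} g" for u
  define H where "H u = exp (- C*u) * F u" for u
  have dF: "(F has_real_derivative g x) (at x within {a..b})" if "x \<in> {a..b}" for x
    using integral_has_vector_derivative[OF cg that] unfolding F_def
    by (simp add: has_real_derivative_iff_has_vector_derivative)
  have dH: "(H has_real_derivative (- C * exp (- C*x) * F x + exp (- C*x) * g x)) (at x within {a..b})" if "x \<in> {a..b}" for x
    unfolding H_def by (auto intro!: derivative_eq_intros dF[OF that])
  have cH: "continuous_on {a..b} H"
    using dH by (meson DERIV_continuous continuous_on_eq_continuous_within)
  have Fnn: "0 \<le> F u" if "u \<in> {a..b}" for u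
    unfolding F_def using that g0
    by (intro integral_nonneg integrable_continuous_interval continuous_on_subset[OF cg]) auto
  have "H a \<ge> H t"
  proof (rule DERIV_nonpos_imp_decreasing_open[where f=H and a=a and b=t])
    show "a \<le> t" using t by auto
    show "continuous_on {a..t} H" using cH t by (auto intro: continuous_on_subset)
    fix x assume x: "a < x" "x < t"
    then have xi: "x \<in> {a..b}" using t by auto
    have "x < b" using x t by auto
    then have "at x within {a..b} = at x" using x by (intro at_within_Icc_at) auto
    then have "DERIV H x :> (- C * exp (- C*x) * F x + exp (- C*x) * g x)" using dH[OF xi] by simp
    moreover have "- C * exp (- C*x) * F x + exp (- C*x) * g x \<le> 0"
    proof -
      have "g x \<le> C * F x" using gb[OF xi] by (simp add: F_def)
      then have "exp (- C*x) * g x \<le> exp (- C*x) * (C * F x)" by (intro mult_left_mono) auto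
      then show ?thesis by (simp add: algebra_simps)
    qed
    ultimately show "\<exists>y. DERIV H x :> y \<and> y \<le> 0" by blast
  qed
  moreover have "H a = 0" by (simp add: H_def F_def)
  ultimately have "F t \<le> 0" unfolding H_def by (simp add: mult_le_0_iff)
  then have "F t = 0" using Fnn[OF t] by auto
  then show ?thesis using gb[OF t] g0[OF t] by (simp add: F_def)
qed

lemma gronwall_bwd_vec:
  fixes u :: "real \<Rightarrow> 'a::euclidean_space" and h :: "real \<Rightarrow> 'b::euclidean_space"
  assumes cu: "continuous_on {a..b} u" and ch: "continuous_on {a..b} h"
    and hb: "\<And>s. s \<in> {a..b} \<Longrightarrow> norm (h s) \<le> K * norm (u s)" and K: "0 \<le> K"
    and ue: "\<And>t. t \<in> {a..b} \<Longrightarrow> norm (u t) \<le> norm (integral {t..b} h)"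
    and t: "t \<in> {a..b}"
  shows "u t = 0"
proof -
  have "norm (u t) = 0"
  proof (rule gronwall_bwd[where g="\<lambda>s. norm (u s)" and C=K and a=a and b=b])
    show "continuous_on {a..b} (\<lambda>s. norm (u s))" using cu by (intro continuous_intros)
    fix s assume s: "s \<in> {a..b}"
    have "norm (integral {s..b} h) \<le> integral {s..b} (\<lambda>r. K * norm (u r))"
      using s hb
      by (intro integral_norm_bound_integral integrable_continuous_interval
          continuous_on_subset[OF ch] continuous_on_subset[OF cu] continuous_intros) auto
    also have "\<dots> = K * integral {s..b} (\<lambda>r. norm (u r))" by simp
    finally show "norm (u s) \<le> K * integral {s..b} (\<lambda>r. norm (u r))" using ue[OF s] by linarith
  qed (use K t in auto)
  then show ?thesis by simp
qed

lemma gronwall_fwd_vec: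
  fixes u :: "real \<Rightarrow> 'a::euclidean_space" and h :: "real \<Rightarrow> 'b::euclidean_space"
  assumes cu: "continuous_on {a..b} u" and ch: "continuous_on {a..b} h"
    and hb: "\<And>s. s \<in> {a..b} \<Longrightarrow> norm (h s) \<le> K * norm (u s)" and K: "0 \<le> K"
    and ue: "\<And>t. t \<in> {a..b} \<Longrightarrow> norm (u t) \<le> norm (integral {a..t} h)"
    and t: "t \<in> {a..b}"
  shows "u t = 0"
proof -
  have "norm (u t) = 0"
  proof (rule gronwall_fwd[where g="\<lambda>s. norm (u s)" and C=K and a=a and b=b])
    show "continuous_on {a..b} (\<lambda>s. norm (u s))" using cu by (intro continuous_intros)
    fix s assume s: "s \<in> {a..b}"
    have "norm (integral {a..s} h) \<le> integral {a..s} (\<lambda>r. K * norm (u r))"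
      using s hb
      by (intro integral_norm_bound_integral integrable_continuous_interval
          continuous_on_subset[OF ch] continuous_on_subset[OF cu] continuous_intros) auto
    also have "\<dots> = K * integral {a..s} (\<lambda>r. norm (u r))" by simp
    finally show "norm (u s) \<le> K * integral {a..s} (\<lambda>r. norm (u r))" using ue[OF s] by linarith
  qed (use K t in auto)
  then show ?thesis by simp
qed


lemma cont_bound:
  assumes "continuous_on {a..b} (f::real \<Rightarrow> 'a::real_normed_vector)"
  obtains B where "0 \<le> B" "\<And>s. s \<in> {a..b} \<Longrightarrow> norm (f s) \<le> B"
proof -
  have "bounded (f ` {a..b})"
    by (rule compact_imp_bounded[OF compact_continuous_image[OF assms compact_Icc]])
  then obtain B where "B > 0" "\<forall>x\<in>f ` {a..b}. norm x \<le> B" unfolding bounded_pos by blast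
  then show ?thesis using that[of B] by auto
qed

lemma mul_bnd: "0 \<le> (a::real) \<Longrightarrow> 0 \<le> b \<Longrightarrow> 0 \<le> K \<Longrightarrow> a \<le> A \<Longrightarrow> b \<le> B \<Longrightarrow> a*b*K \<le> A*B*K"
  by (intro mult_right_mono mult_mono) auto

lemma PiMat_zero:
  assumes "\<And>i a. M $ i $ Inl a = (0::real)"
  shows "M ** PiMat C = 0"
proof -
  have "M $ i $ k * PiMat C $ k $ j = 0" for i k j
    using assms by (cases k; cases j) (auto simp: PiMat_def)
  note z = this
  show ?thesis unfolding matrix_matrix_mult_def vec_eq_iff
    by (auto intro!: sum.neutral simp del: mult_eq_0_iff simp: z)
qed

lemma sig_col: "sigcirc A1 A2 B1 B2 $ i $ Inl a = sigcirc A1 A2 (blkA B1) (blkA B2) $ i $ a"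
  by (simp add: sigcirc_def matrix_matrix_mult_def transpose_def blkA_def)

lemma sig_sym: "transpose (sigcirc A1 A2 A1 A2) = sigcirc A1 A2 A1 A2"
  by (simp add: sigcirc_def tr_add matrix_transpose_mul)

lemma cont_sig: "continuous_on S f1 \<Longrightarrow> continuous_on S f2 \<Longrightarrow> continuous_on S g1 \<Longrightarrow> continuous_on S g2
   \<Longrightarrow> continuous_on S (\<lambda>x. sigcirc (f1 x) (f2 x) (g1 x) (g2 x))"
  unfolding sigcirc_def by (intro continuous_intros cont_mm cont_tr)

theorem mainTheorem3:
  fixes T :: real
    and LamX :: "real \<Rightarrow> real^('l::finite)^('ka::finite + 'kb::finite)" and fX :: "real \<Rightarrow> real^('ka + 'kb)"
    and SX1 :: "real \<Rightarrow> real^('d1::finite)^('ka + 'kb)" and SX2 :: "real \<Rightarrow> real^('d2::finite)^('ka + 'kb)"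
    and LamY :: "real \<Rightarrow> real^'l^'l" and fY :: "real \<Rightarrow> real^'l"
    and SY1 :: "real \<Rightarrow> real^'d1^'l" and SY2 :: "real \<Rightarrow> real^'d2^'l"
    and Ifwd :: "(real \<Rightarrow> real^('ka + 'kb)^'l) \<Rightarrow> real \<Rightarrow> real^'l"
    and Ibwd :: "(real \<Rightarrow> real^('ka + 'kb)^'l) \<Rightarrow> real \<Rightarrow> real^'l"
    and muf mus :: "real \<Rightarrow> real^'l"
    and Rf Rs :: "real \<Rightarrow> real^'l^'l"
  defines "Kf \<equiv> \<lambda>t. (sigcirc (SY1 t) (SY2 t) (SX1 t) (SX2 t) + Rf t ** transpose (LamX t)) ** Pi_of (SX1 t) (SX2 t)"
    and "Ks \<equiv> \<lambda>t. sigcirc (SY1 t) (SY2 t) (SX1 t) (SX2 t) ** Pi_of (SX1 t) (SX2 t)"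
    and "Ac \<equiv> \<lambda>t. LamY t - sigcirc (SY1 t) (SY2 t) (SX1 t) (SX2 t) ** Pi_of (SX1 t) (SX2 t) ** LamX t"
    and "Bc \<equiv> \<lambda>t. sigcirc (SY1 t) (SY2 t) (SY1 t) (SY2 t)
                 - sigcirc (SY1 t) (SY2 t) (SX1 t) (SX2 t) ** Pi_of (SX1 t) (SX2 t) ** sigcirc (SX1 t) (SX2 t) (SY1 t) (SY2 t)"
  assumes T: "0 \<le> T"
    \<comment> \<open>structural hypotheses of the theorem\<close>
    and hLamA: "\<And>t. blkA (LamX t) = 0"
    and hYA: "\<And>t. sigcirc (SY1 t) (SY2 t) (blkA (SX1 t)) (blkA (SX2 t)) = 0"
    and hAB: "\<And>t. sigcirc (blkA (SX1 t)) (blkA (SX2 t)) (blkB (SX1 t)) (blkB (SX2 t)) = 0"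
    and hinvA: "\<And>t. invertible (sigcirc (blkA (SX1 t)) (blkA (SX2 t)) (blkA (SX1 t)) (blkA (SX2 t)))"
    and hinvB: "\<And>t. invertible (sigcirc (blkB (SX1 t)) (blkB (SX2 t)) (blkB (SX1 t)) (blkB (SX2 t)))"
    \<comment> \<open>regularity (well-posedness) of the coefficients along the observed path\<close>
    and cLamX: "continuous_on {0..T} LamX" and cfX: "continuous_on {0..T} fX"
    and cSX1: "continuous_on {0..T} SX1" and cSX2: "continuous_on {0..T} SX2"
    and cLamY: "continuous_on {0..T} LamY" and cfY: "continuous_on {0..T} fY"
    and cSY1: "continuous_on {0..T} SY1" and cSY2: "continuous_on {0..T} SY2"
    \<comment> \<open>forward / backward Ito integrals against the observed path x: linear in the integrand\<close>
    and Ifwd_add: "\<And>G H t. Ifwd (\<lambda>s. G s + H s) t = Ifwd G t + Ifwd H t"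
    and Ifwd_scale: "\<And>c G t. Ifwd (\<lambda>s. c *\<^sub>R G s) t = c *\<^sub>R Ifwd G t"
    and Ibwd_add: "\<And>G H t. Ibwd (\<lambda>s. G s + H s) t = Ibwd G t + Ibwd H t"
    and Ibwd_scale: "\<And>c G t. Ibwd (\<lambda>s. c *\<^sub>R G s) t = c *\<^sub>R Ibwd G t"
    \<comment> \<open>conditional filter statistics (forward equations, integral form)\<close>
    and cmuf: "continuous_on {0..T} muf" and cRf: "continuous_on {0..T} Rf"
    and Rf0_sym: "transpose (Rf 0) = Rf 0"
    and Rf_inv: "\<And>t. t \<in> {0..T} \<Longrightarrow> invertible (Rf t)"
    and muf_eq: "\<And>t. t \<in> {0..T} \<Longrightarrow>
        muf t = muf 0
          + integral {0..t} (\<lambda>s. LamY s *v muf s + fY s - Kf s *v (LamX s *v muf s + fX s))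
          + Ifwd Kf t"
    and Rf_eq: "\<And>t. t \<in> {0..T} \<Longrightarrow>
        Rf t = Rf 0
          + integral {0..t} (\<lambda>s. LamY s ** Rf s + Rf s ** transpose (LamY s)
              + sigcirc (SY1 s) (SY2 s) (SY1 s) (SY2 s)
              - Kf s ** sigcirc (SX1 s) (SX2 s) (SX1 s) (SX2 s) ** transpose (Kf s))"
    \<comment> \<open>conditional smoother statistics (backward equations, integral form)\<close>
    and cmus: "continuous_on {0..T} mus" and cRs: "continuous_on {0..T} Rs"
    and mus_T: "mus T = muf T" and Rs_T: "Rs T = Rf T"
    and mus_eq: "\<And>t. t \<in> {0..T} \<Longrightarrow>
        mus t = mus T
          - integral {t..T} (\<lambda>s. LamY s *v mus s + fY s
              - Bc s *v (matrix_inv (Rf s) *v (muf s - mus s)))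
          + integral {t..T} (\<lambda>s. Ks s *v (LamX s *v mus s + fX s))
          + Ibwd Ks t"
    and Rs_eq: "\<And>t. t \<in> {0..T} \<Longrightarrow>
        Rs t = Rs T
          - integral {t..T} (\<lambda>s. (Ac s + Bc s ** matrix_inv (Rf s)) ** Rs s
              + Rs s ** transpose (Ac s + Bc s ** matrix_inv (Rf s))
              - sigcirc (SY1 s) (SY2 s) (SY1 s) (SY2 s)
              + Ks s ** sigcirc (SX1 s) (SX2 s) (SX1 s) (SX2 s) ** transpose (Ks s))"
  shows "\<forall>t\<in>{0..T}. mus t = muf t \<and> Rs t = Rf t
           \<and> gauss_density (mus t) (Rs t) = gauss_density (muf t) (Rf t)
           \<and> rel_entropy (gauss_density (mus t) (Rs t)) (gauss_density (muf t) (Rf t)) = 0"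
  proof -
  define Q where "Q = (\<lambda>s. sigcirc (SY1 s) (SY2 s) (SY1 s) (SY2 s))"
  define Mi where "Mi = (\<lambda>s. matrix_inv (Rf s))"
  have LXA: "LamX s $ Inl a $ k = 0" for s a k
  proof -
    have "blkA (LamX s) $ a $ k = 0" using hLamA by simp
    then show ?thesis by (simp add: blkA_def)
  qed
  have SP: "sigcirc (SY1 s) (SY2 s) (SX1 s) (SX2 s) ** Pi_of (SX1 s) (SX2 s) = 0" for s
    unfolding Pi_of_def by (rule PiMat_zero) (simp add: sig_col hYA)
  have RLP: "(Rf s ** transpose (LamX s)) ** Pi_of (SX1 s) (SX2 s) = 0" for s
    unfolding Pi_of_def by (rule PiMat_zero) (simp add: matrix_matrix_mult_def transpose_def LXA)
  have Kf0: "Kf = (\<lambda>s. 0)" by (rule ext) (simp add: Kf_def mm_add_r SP RLP)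
  have Ks0: "Ks = (\<lambda>s. 0)" by (rule ext) (simp add: Ks_def SP)
  have Ac0: "Ac = LamY" by (rule ext) (simp add: Ac_def SP)
  have Bc0: "Bc = Q" by (rule ext) (simp add: Bc_def SP Q_def)
  have Ifwd0: "Ifwd (\<lambda>s. 0) t = 0" for t
    using Ifwd_scale[of 0 "\<lambda>s. 0" t] by simp
  have Ibwd0: "Ibwd (\<lambda>s. 0) t = 0" for t
    using Ibwd_scale[of 0 "\<lambda>s. 0" t] by simp
  note cint = cont_mm cont_mv cont_tr cont_sig
  have cQ: "continuous_on {0..T} Q" unfolding Q_def using cSY1 cSY2 by (intro cint)
  have cMi: "continuous_on {0..T} Mi" unfolding Mi_def using cRf Rf_inv by (intro cont_minv) auto
  have QT: "transpose (Q s) = Q s" for s unfolding Q_def by (rule sig_sym)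
  obtain Kv where Kv: "Kv > 0" "\<And>(A::real^'l^'l) x. norm (A *v x) \<le> norm A * norm x * Kv"
    using bounded_bilinear.pos_bounded[OF bb_mv] by blast
  obtain Km where Km: "Km > 0" "\<And>(A::real^'l^'l) (B::real^'l^'l). norm (A ** B) \<le> norm A * norm B * Km"
    using bounded_bilinear.pos_bounded[OF bb_mm] by blast
  define h0 where "h0 = (\<lambda>s. LamY s *v muf s + fY s)"
  have ch0: "continuous_on {0..T} h0" unfolding h0_def using cLamY cmuf cfY by (intro continuous_intros cint)
  have mufT: "muf t = muf T - integral {t..T} h0" if t: "t \<in> {0..T}" for t
  proof -
    have "muf t = muf 0 + integral {0..t} h0" using muf_eq[OF t] by (simp add: Kf0 Ifwd0 h0_def)
    moreover have "muf T = muf 0 + integral {0..T} h0" using muf_eq[of T] T by (simp add: Kf0 Ifwd0 h0_def)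
    moreover have "integral {0..t} h0 + integral {t..T} h0 = integral {0..T} h0"
      using t by (intro Henstock_Kurzweil_Integration.integral_combine integrable_continuous_interval ch0) auto
    ultimately show ?thesis by (simp add: algebra_simps)
  qed
  define h1 where "h1 = (\<lambda>s. LamY s *v mus s + fY s - Q s *v (Mi s *v (muf s - mus s)))"
  have ch1: "continuous_on {0..T} h1" unfolding h1_def using cLamY cmus cmuf cfY cQ cMi
    by (intro continuous_intros cint)
  have musT: "mus t = mus T - integral {t..T} h1" if t: "t \<in> {0..T}" for t
    using mus_eq[OF t] by (simp add: Ks0 Ibwd0 Bc0 h1_def Mi_def)
  have mu_eq: "mus t - muf t = 0" if t: "t \<in> {0..T}" for t
  proof -
    define h where "h = (\<lambda>s. h1 s - h0 s)"
    have ch: "continuous_on {0..T} h" unfolding h_def using ch0 ch1 by (intro continuous_intros)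
    have hform: "h s = LamY s *v (mus s - muf s) + Q s *v (Mi s *v (mus s - muf s))" for s
      unfolding h_def h1_def h0_def by (simp add: algebra_simps)
    obtain BL where BL: "0 \<le> BL" "\<And>s. s \<in> {0..T} \<Longrightarrow> norm (LamY s) \<le> BL" using cont_bound[OF cLamY] by blast
    obtain BQ where BQ: "0 \<le> BQ" "\<And>s. s \<in> {0..T} \<Longrightarrow> norm (Q s) \<le> BQ" using cont_bound[OF cQ] by blast
    obtain BM where BM: "0 \<le> BM" "\<And>s. s \<in> {0..T} \<Longrightarrow> norm (Mi s) \<le> BM" using cont_bound[OF cMi] by blast
    show ?thesis
    proof (rule gronwall_bwd_vec[where h=h and K="BL*Kv + BQ*(BM*Kv)*Kv" and a=0 and b=T])
      show "continuous_on {0..T} (\<lambda>s. mus s - muf s)" using cmus cmuf by (intro continuous_intros)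
      show "continuous_on {0..T} h" by (rule ch)
      show "0 \<le> BL*Kv + BQ*(BM*Kv)*Kv" using BL BQ BM Kv by simp
      fix s assume s: "s \<in> {0..T}"
      let ?d = "mus s - muf s"
      have a1: "norm (LamY s *v ?d) \<le> BL * norm ?d * Kv"
        using Kv(2)[of "LamY s" ?d] mul_bnd[of "norm (LamY s)" "norm ?d" Kv BL "norm ?d"] BL(2)[OF s] Kv(1) by auto
      have a2: "norm (Mi s *v ?d) \<le> BM * norm ?d * Kv"
        using Kv(2)[of "Mi s" ?d] mul_bnd[of "norm (Mi s)" "norm ?d" Kv BM "norm ?d"] BM(2)[OF s] Kv(1) by auto
      have "norm (Q s) * norm (Mi s *v ?d) * Kv \<le> BQ * (BM * norm ?d * Kv) * Kv"
        by (rule mul_bnd) (use BQ(2)[OF s] Kv(1) a2 in auto)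
      then have a3: "norm (Q s *v (Mi s *v ?d)) \<le> BQ * (BM * norm ?d * Kv) * Kv"
        using Kv(2)[of "Q s" "Mi s *v ?d"] by linarith
      have "norm (h s) \<le> BL * norm ?d * Kv + BQ * (BM * norm ?d * Kv) * Kv"
        unfolding hform using a1 a3 norm_triangle_ineq[of "LamY s *v ?d" "Q s *v (Mi s *v ?d)"] by linarith
      then show "norm (h s) \<le> (BL*Kv + BQ*(BM*Kv)*Kv) * norm ?d" by (simp add: algebra_simps)
    next
      fix t assume t: "t \<in> {0..T}"
      have "integral {t..T} h = integral {t..T} h1 - integral {t..T} h0"
        unfolding h_def using t
        by (intro integral_diff integrable_continuous_interval continuous_on_subset[OF ch1] continuous_on_subset[OF ch0]) auto
      then have "mus t - muf t = - integral {t..T} h" using musT[OF t] mufT[OF t] mus_T by simp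
      then show "norm (mus t - muf t) \<le> norm (integral {t..T} h)" by simp
    qed (use t in auto)
  qed
  define F0 where "F0 = (\<lambda>s. LamY s ** Rf s + Rf s ** transpose (LamY s) + Q s)"
  have cF0: "continuous_on {0..T} F0" unfolding F0_def using cLamY cRf cQ by (intro continuous_intros cint)
  have Rf0: "Rf t = Rf 0 + integral {0..t} F0" if t: "t \<in> {0..T}" for t
    using Rf_eq[OF t] by (simp add: Kf0 F0_def Q_def)
  have sym: "transpose (Rf t) = Rf t" if t: "t \<in> {0..T}" for t
  proof -
    define h where "h = (\<lambda>s. LamY s ** (Rf s - transpose (Rf s)) + (Rf s - transpose (Rf s)) ** transpose (LamY s))"
    obtain BL where BL: "0 \<le> BL" "\<And>s. s \<in> {0..T} \<Longrightarrow> norm (LamY s) \<le> BL" using cont_bound[OF cLamY] by blast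
    have cLt: "continuous_on {0..T} (\<lambda>s. transpose (LamY s))" using cLamY by (intro cint)
    obtain BT where BT: "0 \<le> BT" "\<And>s. s \<in> {0..T} \<Longrightarrow> norm (transpose (LamY s)) \<le> BT" using cont_bound[OF cLt] by blast
    have "Rf t - transpose (Rf t) = 0"
    proof (rule gronwall_fwd_vec[where h=h and K="BL*Km + BT*Km" and a=0 and b=T])
      show "continuous_on {0..T} (\<lambda>s. Rf s - transpose (Rf s))" using cRf by (intro continuous_intros cint)
      show "continuous_on {0..T} h" unfolding h_def using cRf cLamY by (intro continuous_intros cint)
      show "0 \<le> BL*Km + BT*Km" using BL BT Km by simp
      fix s assume s: "s \<in> {0..T}"
      let ?G = "Rf s - transpose (Rf s)"
      have a1: "norm (LamY s ** ?G) \<le> BL * norm ?G * Km"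
        using Km(2)[of "LamY s" ?G] mul_bnd[of "norm (LamY s)" "norm ?G" Km BL "norm ?G"] BL(2)[OF s] Km(1) by auto
      have a2: "norm (?G ** transpose (LamY s)) \<le> norm ?G * BT * Km"
        using Km(2)[of ?G "transpose (LamY s)"] mul_bnd[of "norm ?G" "norm (transpose (LamY s))" Km "norm ?G" BT] BT(2)[OF s] Km(1) by auto
      have "norm (h s) \<le> BL * norm ?G * Km + norm ?G * BT * Km"
        unfolding h_def using a1 a2 norm_triangle_ineq[of "LamY s ** ?G" "?G ** transpose (LamY s)"] by linarith
      then show "norm (h s) \<le> (BL*Km + BT*Km) * norm ?G" by (simp add: algebra_simps)
    next
      fix t assume t: "t \<in> {0..T}"
      have int0: "F0 integrable_on {0..t}" using t by (intro integrable_continuous_interval continuous_on_subset[OF cF0]) auto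
      have tr: "transpose (Rf t) = Rf 0 + integral {0..t} (\<lambda>s. transpose (F0 s))"
      proof -
        have "transpose (Rf t) = transpose (Rf 0) + transpose (integral {0..t} F0)"
          using Rf0[OF t] by (simp add: tr_add)
        also have "transpose (integral {0..t} F0) = integral {0..t} (\<lambda>s. transpose (F0 s))"
          using integral_linear[OF int0 bl_tr] by (simp add: o_def)
        finally show ?thesis using Rf0_sym by simp
      qed
      have intT: "(\<lambda>s. transpose (F0 s)) integrable_on {0..t}" using t
        by (intro integrable_continuous_interval continuous_on_subset[OF cF0] cint) auto
      have hF: "h s = F0 s - transpose (F0 s)" for s
        unfolding h_def F0_def by (simp add: tr_add QT matrix_transpose_mul mm_diff_l mm_diff_r algebra_simps)
      have "Rf t - transpose (Rf t) = integral {0..t} h"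
        unfolding hF integral_diff[OF int0 intT] using Rf0[OF t] tr by simp
      then show "norm (Rf t - transpose (Rf t)) \<le> norm (integral {0..t} h)" by simp
    qed (use t in auto)
    then show ?thesis by simp
  qed
  have RfT: "Rf t = Rf T - integral {t..T} F0" if t: "t \<in> {0..T}" for t
  proof -
    have "integral {0..t} F0 + integral {t..T} F0 = integral {0..T} F0"
      using t by (intro Henstock_Kurzweil_Integration.integral_combine integrable_continuous_interval cF0) auto
    then show ?thesis using Rf0[OF t] Rf0[of T] T by (simp add: algebra_simps)
  qed
  define A where "A = (\<lambda>s. LamY s + Q s ** Mi s)"
  define F1 where "F1 = (\<lambda>s. A s ** Rs s + Rs s ** transpose (A s) - Q s)"
  have cA: "continuous_on {0..T} A" unfolding A_def using cLamY cQ cMi by (intro continuous_intros cint)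
  have cF1: "continuous_on {0..T} F1" unfolding F1_def using cA cRs cQ by (intro continuous_intros cint)
  have RsT: "Rs t = Rs T - integral {t..T} F1" if t: "t \<in> {0..T}" for t
    using Rs_eq[OF t] by (simp add: Ks0 Ac0 Bc0 F1_def A_def Mi_def Q_def)
  have R_eq: "Rs t - Rf t = 0" if t: "t \<in> {0..T}" for t
  proof -
    define h where "h = (\<lambda>s. A s ** (Rs s - Rf s) + (Rs s - Rf s) ** transpose (A s))"
    obtain BA where BA: "0 \<le> BA" "\<And>s. s \<in> {0..T} \<Longrightarrow> norm (A s) \<le> BA" using cont_bound[OF cA] by blast
    have cAt: "continuous_on {0..T} (\<lambda>s. transpose (A s))" using cA by (intro cint)
    obtain BT where BT: "0 \<le> BT" "\<And>s. s \<in> {0..T} \<Longrightarrow> norm (transpose (A s)) \<le> BT" using cont_bound[OF cAt] by blast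
    show ?thesis
    proof (rule gronwall_bwd_vec[where h=h and K="BA*Km + BT*Km" and a=0 and b=T])
      show "continuous_on {0..T} (\<lambda>s. Rs s - Rf s)" using cRf cRs by (intro continuous_intros)
      show "continuous_on {0..T} h" unfolding h_def using cRf cRs cA by (intro continuous_intros cint)
      show "0 \<le> BA*Km + BT*Km" using BA BT Km by simp
      fix s assume s: "s \<in> {0..T}"
      let ?G = "Rs s - Rf s"
      have a1: "norm (A s ** ?G) \<le> BA * norm ?G * Km"
        using Km(2)[of "A s" ?G] mul_bnd[of "norm (A s)" "norm ?G" Km BA "norm ?G"] BA(2)[OF s] Km(1) by auto
      have a2: "norm (?G ** transpose (A s)) \<le> norm ?G * BT * Km"
        using Km(2)[of ?G "transpose (A s)"] mul_bnd[of "norm ?G" "norm (transpose (A s))" Km "norm ?G" BT] BT(2)[OF s] Km(1) by auto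
      have "norm (h s) \<le> BA * norm ?G * Km + norm ?G * BT * Km"
        unfolding h_def using a1 a2 norm_triangle_ineq[of "A s ** ?G" "?G ** transpose (A s)"] by linarith
      then show "norm (h s) \<le> (BA*Km + BT*Km) * norm ?G" by (simp add: algebra_simps)
    next
      fix t assume t: "t \<in> {0..T}"
      have hF: "h s = F1 s - F0 s" if s: "s \<in> {0..T}" for s
      proof -
        have inv: "Mi s ** Rf s = mat 1" using minv[OF Rf_inv[OF s]] by (simp add: Mi_def)
        have e1: "A s ** Rf s = LamY s ** Rf s + Q s"
          unfolding A_def by (simp add: mm_add_r matrix_mul_assoc[symmetric] inv)
        have "Rf s ** transpose (Mi s) = transpose (Mi s ** Rf s)"
          using sym[OF s] by (simp add: matrix_transpose_mul)
        then have rm: "Rf s ** transpose (Mi s) = mat 1" by (simp add: inv)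
        have e2: "Rf s ** transpose (A s) = Rf s ** transpose (LamY s) + Q s"
          unfolding A_def by (simp add: tr_add matrix_add_ldistrib matrix_transpose_mul QT matrix_mul_assoc rm)
        have "F1 s - F0 s = A s ** (Rs s - Rf s) + (Rs s - Rf s) ** transpose (A s) + (A s ** Rf s + Rf s ** transpose (A s)) - Q s - F0 s"
          unfolding F1_def by (simp add: mm_diff_l mm_diff_r algebra_simps)
        also have "\<dots> = h s" unfolding e1 e2 F0_def h_def by (simp add: algebra_simps)
        finally show ?thesis by simp
      qed
      have int0: "F0 integrable_on {t..T}" using t by (intro integrable_continuous_interval continuous_on_subset[OF cF0]) auto
      have int1: "F1 integrable_on {t..T}" using t by (intro integrable_continuous_interval continuous_on_subset[OF cF1]) auto
      have "integral {t..T} h = integral {t..T} (\<lambda>s. F1 s - F0 s)"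
        using t by (intro integral_cong) (auto simp: hF)
      also have "\<dots> = integral {t..T} F1 - integral {t..T} F0" by (rule integral_diff[OF int1 int0])
      finally have "Rs t - Rf t = - integral {t..T} h" using RsT[OF t] RfT[OF t] Rs_T by simp
      then show "norm (Rs t - Rf t) \<le> norm (integral {t..T} h)" by simp
    qed (use t in auto)
  qed
  show ?thesis
  proof
    fix t assume t: "t \<in> {0..T}"
    have m: "mus t = muf t" using mu_eq[OF t] by simp
    have r: "Rs t = Rf t" using R_eq[OF t] by simp
    have "rel_entropy (gauss_density (muf t) (Rf t)) (gauss_density (muf t) (Rf t)) = 0"
    proof -
      have e: "(\<lambda>y. gauss_density (muf t) (Rf t) y * ln (gauss_density (muf t) (Rf t) y / gauss_density (muf t) (Rf t) y)) = (\<lambda>y. 0)"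
        by (rule ext, case_tac "gauss_density (muf t) (Rf t) y = 0") auto
      show ?thesis unfolding rel_entropy_def e by simp
    qed
    then show "mus t = muf t \<and> Rs t = Rf t
           \<and> gauss_density (mus t) (Rs t) = gauss_density (muf t) (Rf t)
           \<and> rel_entropy (gauss_density (mus t) (Rs t)) (gauss_density (muf t) (Rf t)) = 0"
      using m r by simp
  qed
qed

end
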